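(* Let $w :: \bar v, \bar\sigma \Rightarrow \bar\rho, \bar\kappa$ be a raw match derivation. Then $\mathrm{bwd}_w : \mathrm{Sel}(\bar\rho)\times\mathrm{Sel}(\bar\kappa)\times\mathbb{A} \to \mathrm{Sel}(\bar v)\times\mathrm{Sel}(\bar\sigma)$ and $\mathrm{fwd}_w : \mathrm{Sel}(\bar v)\times\mathrm{Sel}(\bar\sigma)\to\mathrm{Sel}(\bar\rho)\times\mathrm{Sel}(\bar\kappa)\times\mathbb{A}$ form a Galois connection with $\mathrm{bwd}_w$ the lower adjoint: both are monotone, and for all $(\rho,\kappa,\alpha)$ and all $(v,\sigma)$ we have $\mathrm{fwd}_w(\mathrm{bwd}_w(\rho,\kappa,\alpha)) \ge (\rho,\kappa,\alpha)$ and $\mathrm{bwd}_w(\mathrm{fwd}_w(v,\sigma)) \le (v,\sigma)$.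
   Context: Fix a bounded lattice $(\mathbb{A},\le,\top,\bot,\sqcap,\sqcup)$ of "selection states". Raw values are $\bar v ::= \mathsf{true}\mid\mathsf{false}\mid n \mid [\,] \mid (\bar u : \bar v) \mid \langle x_1:\bar v_1,\dots,x_k:\bar v_k\rangle \mid$ closures. A selection of a raw value $\bar v$ is the same tree with an element of $\mathbb{A}$ attached to every Boolean, integer, nil, cons and record node (closures carry selections on their components), written $\mathsf{true}_\alpha$, $\mathsf{false}_\alpha$, $n_\alpha$, $[\,]_\alpha$, $(u :_\alpha v)$, $\langle x_1:v_1,\dots,x_k:v_k\rangle_\alpha$. $\mathrm{Sel}(\bar v)$ denotes the set of selections of shape $\bar v$, ordered pointwise; it is a bounded lattice. Likewise for every raw term, eliminator, continuation or environment $\bar X$, $\mathrm{Sel}(\bar X)$ is the pointwise-ordered lattice of its selections; $\bot$ also denotes the least selection of a given raw object. Environments are finite sequences $\rho = x_1:v_1,\dots,x_k:v_k$ with concatenation $\cdot$ and empty environment $\varepsilon$; selections of an environment are pointwise. Products of lattices are ordered componentwise. Eliminators: $\sigma ::= (x\mapsto\kappa) \mid \{\mathsf{true}\mapsto\kappa,\ \mathsf{false}\mapsto\kappa'\} \mid \{\langle x_1,\dots,x_k\rangle\mapsto\kappa\}\ (k\ge 0) \mid \{[\,]\mapsto\kappa,\ (:)\mapsto\sigma'\}$, where a continuation $\kappa$ is either a term or an eliminator. Eliminators carry no selection states of their own; a selection of an eliminator is a selection of each of its component continuations. Raw match derivations $w :: \bar v, \bar\sigma \Rightarrow \bar\rho,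 \bar\kappa$ are generated by: (var) $x :: \bar v, (x\mapsto\bar\kappa) \Rightarrow (x:\bar v), \bar\kappa$; (true) $\mathsf{true} :: \mathsf{true}, \{\mathsf{true}\mapsto\bar\kappa,\mathsf{false}\mapsto\bar\kappa'\} \Rightarrow \varepsilon, \bar\kappa$; (false) analogously yielding $\varepsilon,\bar\kappa'$; (nil) $[\,] :: [\,], \{[\,]\mapsto\bar\kappa,(:)\mapsto\bar\sigma\} \Rightarrow \varepsilon,\bar\kappa$; (cons) if $w_1 :: \bar v_1,\bar\sigma_1 \Rightarrow \bar\rho_1,\bar\tau$ and $w_2 :: \bar v_2,\bar\tau \Rightarrow \bar\rho_2,\bar\kappa$ then $(w_1:w_2) :: (\bar v_1:\bar v_2), \{[\,]\mapsto\bar\kappa_0,(:)\mapsto\bar\sigma_1\} \Rightarrow \bar\rho_1\cdot\bar\rho_2,\bar\kappa$; (unit) $\langle\rangle :: \langle\rangle, \{\langle\rangle\mapsto\bar\kappa\}\Rightarrow\varepsilon,\bar\kappa$; (record, $k\ge1$) if $w' :: \langle x_1:\bar v_1,\dots,x_{k-1}:\bar v_{k-1}\rangle, \{\langle x_1,\dots,x_{k-1}\rangle\mapsto\bar\kappa_0\} \Rightarrow \bar\rho,\bar\sigma'$ with $w' = \langle x_1:w_1,\dots,x_{k-1}:w_{k-1}\rangle$ and $w_k :: \bar v_k,\bar\sigma'\Rightarrow\bar\rho',\bar\kappa$, then $\langle x_1:w_1,\dots,x_k:w_k\rangle :: \langle x_1:\bar v_1,\dots,x_k:\bar v_k\rangle,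 \{\langle x_1,\dots,x_k\rangle\mapsto\bar\kappa_0\} \Rightarrow \bar\rho\cdot\bar\rho',\bar\kappa$. Forward match $\mathrm{fwd}_w$ is defined by recursion on $w$: (var) $\mathrm{fwd}(v, x\mapsto\kappa) = (x:v,\kappa,\top)$; (true) $\mathrm{fwd}(\mathsf{true}_\alpha,\{\mathsf{true}\mapsto\kappa,\mathsf{false}\mapsto\kappa'\}) = (\varepsilon,\kappa,\alpha)$; (false) $\mathrm{fwd}(\mathsf{false}_\alpha,\{\mathsf{true}\mapsto\kappa,\mathsf{false}\mapsto\kappa'\})=(\varepsilon,\kappa',\alpha)$; (nil) $\mathrm{fwd}([\,]_\alpha,\{[\,]\mapsto\kappa,(:)\mapsto\sigma'\})=(\varepsilon,\kappa,\alpha)$; (cons) if $\mathrm{fwd}_{w_1}(v_1,\sigma_1)=(\rho_1,\tau,\beta)$ and $\mathrm{fwd}_{w_2}(v_2,\tau)=(\rho_2,\kappa,\beta')$ then $\mathrm{fwd}_{w_1:w_2}((v_1:_\alpha v_2),\{[\,]\mapsto\kappa_0,(:)\mapsto\sigma_1\}) = (\rho_1\cdot\rho_2,\kappa,\alpha\sqcap\beta\sqcap\beta')$; (unit) $\mathrm{fwd}(\langle\rangle_\alpha,\{\langle\rangle\mapsto\kappa\}) = (\varepsilon,\kappa,\alpha)$; (record, $k\ge1$) if $\mathrm{fwd}_{w'}(\langle x_1:v_1,\dots,x_{k-1}:v_{k-1}\rangle_\top, \{\langle x_1,\dots,x_{k-1}\rangle\mapsto\kappa_0\}) = (\rho,\sigma',\beta)$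 and $\mathrm{fwd}_{w_k}(v_k,\sigma') = (\rho',\kappa,\beta')$ then $\mathrm{fwd}(\langle x_1:v_1,\dots,x_k:v_k\rangle_\alpha, \{\langle x_1,\dots,x_k\rangle\mapsto\kappa_0\}) = (\rho\cdot\rho',\kappa,\alpha\sqcap\beta\sqcap\beta')$. Backward match $\mathrm{bwd}_w$ is defined by recursion on $w$ (below $\bot$ is the least selection of the raw continuation of the untaken branch in $\bar\sigma$, and an environment selection in $\mathrm{Sel}(\bar\rho_1\cdot\bar\rho_2)$ is split uniquely as $\rho_1\cdot\rho_2$ with $\rho_i\in\mathrm{Sel}(\bar\rho_i)$): (var) $\mathrm{bwd}(x:v,\kappa,\alpha) = (v, x\mapsto\kappa)$; (true) $\mathrm{bwd}(\varepsilon,\kappa,\alpha) = (\mathsf{true}_\alpha,\{\mathsf{true}\mapsto\kappa,\mathsf{false}\mapsto\bot\})$; (false) $\mathrm{bwd}(\varepsilon,\kappa,\alpha) = (\mathsf{false}_\alpha,\{\mathsf{true}\mapsto\bot,\mathsf{false}\mapsto\kappa\})$; (nil) $\mathrm{bwd}(\varepsilon,\kappa,\alpha) = ([\,]_\alpha,\{[\,]\mapsto\kappa,(:)\mapsto\bot\})$; (cons) if $\mathrm{bwd}_{w_2}(\rho_2,\kappa,\alpha) = (v_2,\tau)$ and $\mathrm{bwd}_{w_1}(\rho_1,\tau,\alpha) = (v_1,\sigma_1)$ then $\mathrm{bwd}_{w_1:w_2}(\rho_1\cdot\rho_2,\kappa,\alpha) = ((v_1:_\alpha v_2),\{[\,]\mapsto\bot,(:)\mapsto\sigma_1\})$;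 (unit) $\mathrm{bwd}(\varepsilon,\kappa,\alpha) = (\langle\rangle_\alpha,\{\langle\rangle\mapsto\kappa\})$; (record, $k\ge 1$) if $\mathrm{bwd}_{w_k}(\rho_2,\kappa,\alpha) = (v_k,\sigma')$ and $\mathrm{bwd}_{w'}(\rho_1,\sigma',\alpha) = (\langle x_1:v_1,\dots,x_{k-1}:v_{k-1}\rangle_\beta, \{\langle x_1,\dots,x_{k-1}\rangle\mapsto\kappa_0\})$ then $\mathrm{bwd}(\rho_1\cdot\rho_2,\kappa,\alpha) = (\langle x_1:v_1,\dots,x_k:v_k\rangle_\alpha, \{\langle x_1,\dots,x_k\rangle\mapsto\kappa_0\})$. *)

theory Defs
  imports Main
begin

text \<open>Selections are represented by the datatypes below instantiated at the lattice
 type 'a of selection states; raw objects are the same datatypes instantiated at unit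
 (every annotation is the trivial value ()).\<close>

type_synonym var = string

text \<open>Terms are not specified in the context; we use a generic first-order syntax where each
 node has a label, a list of selection slots, subterms and embedded eliminators.\<close>

datatype 'a val =
    VTrue 'a
  | VFalse 'a
  | VInt int 'a
  | VNil 'a
  | VCons 'a "'a val" "'a val"
  | VRec "(var \<times> 'a val) list" 'a
  | VClos "(var \<times> 'a val) list" "(var \<times> 'a elim) list" "'a elim"
and 'a elim =
    EVar var "'a cont"
  | EBool "'a cont" "'a cont"
  | ERec "var list" "'a cont"
  | EList "'a cont" "'a elim"
and 'a cont =
    CTrm "'a trm"
  | CElim "'a elim"
and 'a trm =
    TNode string "'a list" "'a trm list" "'a elim list"

type_synonym 'a env = "(var \<times> 'a val) list"

datatype mderiv =
    MVar var
  | MTrue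
  | MFalse
  | MNil
  | MCons mderiv mderiv
  | MRec "(var \<times> mderiv) list"

abbreviation erase_val :: "'a val \<Rightarrow> unit val" where
  "erase_val v \<equiv> map_val (\<lambda>_. ()) v"
abbreviation erase_elim :: "'a elim \<Rightarrow> unit elim" where
  "erase_elim s \<equiv> map_elim (\<lambda>_. ()) s"
abbreviation erase_cont :: "'a cont \<Rightarrow> unit cont" where
  "erase_cont k \<equiv> map_cont (\<lambda>_. ()) k"
abbreviation erase_env :: "'a env \<Rightarrow> unit env" where
  "erase_env \<rho> \<equiv> map (\<lambda>(x, v). (x, erase_val v)) \<rho>"

definition Sel_val :: "unit val \<Rightarrow> 'a val set" where
  "Sel_val vr = {v. erase_val v = vr}"
definition Sel_elim :: "unit elim \<Rightarrow> 'a elim set" where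
  "Sel_elim sr = {s. erase_elim s = sr}"
definition Sel_cont :: "unit cont \<Rightarrow> 'a cont set" where
  "Sel_cont kr = {k. erase_cont k = kr}"
definition Sel_env :: "unit env \<Rightarrow> 'a env set" where
  "Sel_env rr = {\<rho>. erase_env \<rho> = rr}"

abbreviation leq_val :: "'a::order val \<Rightarrow> 'a val \<Rightarrow> bool" where
  "leq_val \<equiv> rel_val (\<le>)"
abbreviation leq_elim :: "'a::order elim \<Rightarrow> 'a elim \<Rightarrow> bool" where
  "leq_elim \<equiv> rel_elim (\<le>)"
abbreviation leq_cont :: "'a::order cont \<Rightarrow> 'a cont \<Rightarrow> bool" where
  "leq_cont \<equiv> rel_cont (\<le>)"
abbreviation leq_env :: "'a::order env \<Rightarrow> 'a env \<Rightarrow> bool" where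
  "leq_env \<equiv> list_all2 (rel_prod (=) (rel_val (\<le>)))"

definition leq_VS :: "'a::order val \<times> 'a elim \<Rightarrow> 'a val \<times> 'a elim \<Rightarrow> bool" where
  "leq_VS p q \<longleftrightarrow> leq_val (fst p) (fst q) \<and> leq_elim (snd p) (snd q)"
definition leq_RKA :: "'a::order env \<times> 'a cont \<times> 'a \<Rightarrow> 'a env \<times> 'a cont \<times> 'a \<Rightarrow> bool" where
  "leq_RKA p q \<longleftrightarrow> (case p of (\<rho>, \<kappa>, \<alpha>) \<Rightarrow> case q of (\<rho>', \<kappa>', \<alpha>') \<Rightarrow>
      leq_env \<rho> \<rho>' \<and> leq_cont \<kappa> \<kappa>' \<and> \<alpha> \<le> \<alpha>')"

inductive matches :: "mderiv \<Rightarrow> unit val \<Rightarrow> unit elim \<Rightarrow> unit env \<Rightarrow> unit cont \<Rightarrow> bool" where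
  m_var: "matches (MVar x) v (EVar x \<kappa>) [(x, v)] \<kappa>"
| m_true: "matches MTrue (VTrue ()) (EBool \<kappa> \<kappa>') [] \<kappa>"
| m_false: "matches MFalse (VFalse ()) (EBool \<kappa> \<kappa>') [] \<kappa>'"
| m_nil: "matches MNil (VNil ()) (EList \<kappa> \<sigma>) [] \<kappa>"
| m_cons: "matches w1 v1 \<sigma>1 \<rho>1 (CElim \<tau>) \<Longrightarrow> matches w2 v2 \<tau> \<rho>2 \<kappa> \<Longrightarrow>
     matches (MCons w1 w2) (VCons () v1 v2) (EList \<kappa>0 \<sigma>1) (\<rho>1 @ \<rho>2) \<kappa>"
| m_unit: "matches (MRec []) (VRec [] ()) (ERec [] \<kappa>) [] \<kappa>"
| m_rec: "matches (MRec ws) (VRec fs ()) (ERec xs \<kappa>0) \<rho> (CElim \<sigma>') \<Longrightarrow>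
     matches wk vk \<sigma>' \<rho>' \<kappa> \<Longrightarrow>
     matches (MRec (ws @ [(x, wk)])) (VRec (fs @ [(x, vk)]) ()) (ERec (xs @ [x]) \<kappa>0) (\<rho> @ \<rho>') \<kappa>"

lemma size_butlast_less:
  "ws \<noteq> [] \<Longrightarrow> size_list f (butlast ws) < size_list f ws + Suc 0"
  by (induct ws) auto

lemma size_butlast_less2:
  "ws \<noteq> [] \<Longrightarrow> size_list f (butlast ws) < size_list f ws"
  by (induct ws) auto

lemma size_snd_last_less:
  "ws \<noteq> [] \<Longrightarrow> size (snd (last ws)) < Suc (size_list (size_prod (\<lambda>_. 0) size) ws)"
  by (induct ws) auto

lemma size_last_less:
  "ws \<noteq> [] \<Longrightarrow> f (last ws) < size_list f ws + Suc 0"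
  by (induct ws) auto

text \<open>Number of bindings produced by a derivation (= length of the raw environment).\<close>
function mlen :: "mderiv \<Rightarrow> nat" where
  "mlen (MVar x) = 1"
| "mlen MTrue = 0"
| "mlen MFalse = 0"
| "mlen MNil = 0"
| "mlen (MCons w1 w2) = mlen w1 + mlen w2"
| "mlen (MRec ws) = (if ws = [] then 0 else mlen (MRec (butlast ws)) + mlen (snd (last ws)))"
  by pat_completeness auto
termination
  apply (relation "measure size")
  apply (auto simp: size_butlast_less size_butlast_less2 size_snd_last_less)
  done

text \<open>The record equation unfolds indefinitely under simp; it is kept only as a named fact.\<close>
declare mlen.simps(6) [simp del]

function tgt :: "mderiv \<Rightarrow> 'a elim \<Rightarrow> 'a cont" where
  "tgt (MVar x) (EVar y \<kappa>) = \<kappa>"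
| "tgt MTrue (EBool \<kappa> \<kappa>') = \<kappa>"
| "tgt MFalse (EBool \<kappa> \<kappa>') = \<kappa>'"
| "tgt MNil (EList \<kappa> \<sigma>) = \<kappa>"
| "tgt (MCons w1 w2) (EList \<kappa>0 \<sigma>1) =
     (case tgt w1 \<sigma>1 of CElim \<tau> \<Rightarrow> tgt w2 \<tau> | c \<Rightarrow> c)"
| "tgt (MRec ws) (ERec xs \<kappa>0) =
     (if ws = [] then \<kappa>0 else
      (case tgt (MRec (butlast ws)) (ERec (butlast xs) \<kappa>0) of
         CElim \<sigma>' \<Rightarrow> tgt (snd (last ws)) \<sigma>' | c \<Rightarrow> c))"
| "tgt (MVar v) (EBool va vb) = undefined"
| "tgt (MVar v) (ERec va vb) = undefined"
| "tgt (MVar v) (EList va vb) = undefined"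
| "tgt MTrue (EVar va vb) = undefined"
| "tgt MTrue (ERec va vb) = undefined"
| "tgt MTrue (EList va vb) = undefined"
| "tgt MFalse (EVar va vb) = undefined"
| "tgt MFalse (ERec va vb) = undefined"
| "tgt MFalse (EList va vb) = undefined"
| "tgt MNil (EVar va vb) = undefined"
| "tgt MNil (EBool va vb) = undefined"
| "tgt MNil (ERec va vb) = undefined"
| "tgt (MCons w1 w2) (EVar va vb) = undefined"
| "tgt (MCons w1 w2) (EBool va vb) = undefined"
| "tgt (MCons w1 w2) (ERec va vb) = undefined"
| "tgt (MRec ws) (EVar va vb) = undefined"
| "tgt (MRec ws) (EBool va vb) = undefined"
| "tgt (MRec ws) (EList va vb) = undefined"
  by pat_completeness auto
termination
  apply (relation "measure (size \<circ> fst)")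
  apply (auto simp: size_butlast_less size_butlast_less2 size_snd_last_less)
  done

declare tgt.simps(6) [simp del]


section \<open>Destructors (used to read off components; total, arbitrary on other shapes)\<close>

primrec ann_val :: "'a val \<Rightarrow> 'a" where
  "ann_val (VTrue a) = a" | "ann_val (VFalse a) = a" | "ann_val (VInt n a) = a"
| "ann_val (VNil a) = a" | "ann_val (VCons a u v) = a" | "ann_val (VRec fs a) = a"
| "ann_val (VClos \<gamma> h s) = undefined"

primrec cons_hd :: "'a val \<Rightarrow> 'a val" where
  "cons_hd (VCons a u v) = u" | "cons_hd (VTrue a) = undefined" | "cons_hd (VFalse a) = undefined"
| "cons_hd (VInt n a) = undefined" | "cons_hd (VNil a) = undefined"
| "cons_hd (VRec fs a) = undefined" | "cons_hd (VClos \<gamma> h s) = undefined"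

primrec cons_tl :: "'a val \<Rightarrow> 'a val" where
  "cons_tl (VCons a u v) = v" | "cons_tl (VTrue a) = undefined" | "cons_tl (VFalse a) = undefined"
| "cons_tl (VInt n a) = undefined" | "cons_tl (VNil a) = undefined"
| "cons_tl (VRec fs a) = undefined" | "cons_tl (VClos \<gamma> h s) = undefined"

primrec rec_fields :: "'a val \<Rightarrow> (var \<times> 'a val) list" where
  "rec_fields (VRec fs a) = fs" | "rec_fields (VTrue a) = undefined"
| "rec_fields (VFalse a) = undefined" | "rec_fields (VInt n a) = undefined"
| "rec_fields (VNil a) = undefined" | "rec_fields (VCons a u v) = undefined"
| "rec_fields (VClos \<gamma> h s) = undefined"

primrec var_cont :: "'a elim \<Rightarrow> 'a cont" where
  "var_cont (EVar x k) = k" | "var_cont (EBool k k') = undefined"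
| "var_cont (ERec xs k) = undefined" | "var_cont (EList k s) = undefined"

primrec true_cont :: "'a elim \<Rightarrow> 'a cont" where
  "true_cont (EBool k k') = k" | "true_cont (EVar x k) = undefined"
| "true_cont (ERec xs k) = undefined" | "true_cont (EList k s) = undefined"

primrec false_cont :: "'a elim \<Rightarrow> 'a cont" where
  "false_cont (EBool k k') = k'" | "false_cont (EVar x k) = undefined"
| "false_cont (ERec xs k) = undefined" | "false_cont (EList k s) = undefined"

primrec nil_cont :: "'a elim \<Rightarrow> 'a cont" where
  "nil_cont (EList k s) = k" | "nil_cont (EVar x k) = undefined"
| "nil_cont (ERec xs k) = undefined" | "nil_cont (EBool k k') = undefined"

primrec cons_elim :: "'a elim \<Rightarrow> 'a elim" where
  "cons_elim (EList k s) = s" | "cons_elim (EVar x k) = undefined"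
| "cons_elim (ERec xs k) = undefined" | "cons_elim (EBool k k') = undefined"

primrec rec_names :: "'a elim \<Rightarrow> var list" where
  "rec_names (ERec xs k) = xs" | "rec_names (EVar x k) = undefined"
| "rec_names (EList k s) = undefined" | "rec_names (EBool k k') = undefined"

primrec rec_cont :: "'a elim \<Rightarrow> 'a cont" where
  "rec_cont (ERec xs k) = k" | "rec_cont (EVar x k) = undefined"
| "rec_cont (EList k s) = undefined" | "rec_cont (EBool k k') = undefined"

primrec elim_of :: "'a cont \<Rightarrow> 'a elim" where
  "elim_of (CElim s) = s" | "elim_of (CTrm t) = undefined"

text \<open>Defined by recursion on the derivation w, following the clauses of the paper; the
 components of v and sigma are read off with the destructors above (on inputs of the shape
 prescribed by w these are exactly the pattern-matched components).\<close>

function fwd :: "mderiv \<Rightarrow> 'a::bounded_lattice val \<Rightarrow> 'a elim \<Rightarrow> 'a env \<times> 'a cont \<times> 'a" where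
  "fwd (MVar x) v \<sigma> = ([(x, v)], var_cont \<sigma>, top)"
| "fwd MTrue v \<sigma> = ([], true_cont \<sigma>, ann_val v)"
| "fwd MFalse v \<sigma> = ([], false_cont \<sigma>, ann_val v)"
| "fwd MNil v \<sigma> = ([], nil_cont \<sigma>, ann_val v)"
| "fwd (MCons w1 w2) v \<sigma> =
     (let (\<rho>1, \<tau>, \<beta>) = fwd w1 (cons_hd v) (cons_elim \<sigma>);
          (\<rho>2, \<kappa>, \<beta>') = fwd w2 (cons_tl v) (elim_of \<tau>)
      in (\<rho>1 @ \<rho>2, \<kappa>, inf (inf (ann_val v) \<beta>) \<beta>'))"
| "fwd (MRec ws) v \<sigma> =
     (if ws = [] then ([], rec_cont \<sigma>, ann_val v) else
      (let fs = rec_fields v; xs = rec_names \<sigma>;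
           (\<rho>, \<sigma>', \<beta>) = fwd (MRec (butlast ws)) (VRec (butlast fs) top)
                               (ERec (butlast xs) (rec_cont \<sigma>));
           (\<rho>', \<kappa>, \<beta>') = fwd (snd (last ws)) (snd (last fs)) (elim_of \<sigma>')
       in (\<rho> @ \<rho>', \<kappa>, inf (inf (ann_val v) \<beta>) \<beta>')))"
  by pat_completeness auto
termination
  apply (relation "measure (size \<circ> fst)")
  apply (auto simp: size_butlast_less size_butlast_less2 size_snd_last_less)
  done

declare fwd.simps(6) [simp del]

text \<open>The backward function is indexed by the derivation w :: v, sigma => rho, kappa;
 besides w it takes the raw eliminator sigma, which determines the least selections of
 untaken branches and, via tgt, the raw intermediate eliminators.  Environment selections
 are split according to the number of bindings (mlen) of the first sub-derivation, i.e.
 the length of the raw environment it produces.\<close>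

abbreviation bot_cont :: "unit cont \<Rightarrow> 'a::bot cont" where
  "bot_cont k \<equiv> map_cont (\<lambda>_. bot) k"
abbreviation bot_elim :: "unit elim \<Rightarrow> 'a::bot elim" where
  "bot_elim s \<equiv> map_elim (\<lambda>_. bot) s"

function bwd :: "mderiv \<Rightarrow> unit elim \<Rightarrow> 'a::bounded_lattice env \<Rightarrow> 'a cont \<Rightarrow> 'a
    \<Rightarrow> 'a val \<times> 'a elim" where
  "bwd (MVar x) sr \<rho> \<kappa> \<alpha> = (snd (hd \<rho>), EVar x \<kappa>)"
| "bwd MTrue sr \<rho> \<kappa> \<alpha> = (VTrue \<alpha>, EBool \<kappa> (bot_cont (false_cont sr)))"
| "bwd MFalse sr \<rho> \<kappa> \<alpha> = (VFalse \<alpha>, EBool (bot_cont (true_cont sr)) \<kappa>)"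
| "bwd MNil sr \<rho> \<kappa> \<alpha> = (VNil \<alpha>, EList \<kappa> (bot_elim (cons_elim sr)))"
| "bwd (MCons w1 w2) sr \<rho> \<kappa> \<alpha> =
     (let s1 = cons_elim sr;
          (v2, \<tau>) = bwd w2 (elim_of (tgt w1 s1)) (drop (mlen w1) \<rho>) \<kappa> \<alpha>;
          (v1, \<sigma>1) = bwd w1 s1 (take (mlen w1) \<rho>) (CElim \<tau>) \<alpha>
      in (VCons \<alpha> v1 v2, EList (bot_cont (nil_cont sr)) \<sigma>1))"
| "bwd (MRec ws) sr \<rho> \<kappa> \<alpha> =
     (if ws = [] then (VRec [] \<alpha>, ERec [] \<kappa>) else
      (let w' = MRec (butlast ws); sr' = ERec (butlast (rec_names sr)) (rec_cont sr);
           n = mlen w';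
           (vk, \<sigma>') = bwd (snd (last ws)) (elim_of (tgt w' sr')) (drop n \<rho>) \<kappa> \<alpha>;
           (v', s') = bwd w' sr' (take n \<rho>) (CElim \<sigma>') \<alpha>
       in (VRec (rec_fields v' @ [(fst (last ws), vk)]) \<alpha>, ERec (rec_names sr) (rec_cont s'))))"
  by pat_completeness auto
termination
  apply (relation "measure (size \<circ> fst)")
  apply (auto simp: size_butlast_less size_butlast_less2 size_snd_last_less)
  done

declare bwd.simps(6) [simp del]

end

theory Submission
  imports Defs
begin


lemma er_VTrue: "map_val f v = VTrue b \<longleftrightarrow> (\<exists>a. v = VTrue a \<and> f a = b)" by (cases v) auto
lemma er_VFalse: "map_val f v = VFalse b \<longleftrightarrow> (\<exists>a. v = VFalse a \<and> f a = b)" by (cases v) auto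
lemma er_VNil: "map_val f v = VNil b \<longleftrightarrow> (\<exists>a. v = VNil a \<and> f a = b)" by (cases v) auto
lemma er_VCons: "map_val f v = VCons b u1 u2 \<longleftrightarrow> (\<exists>a v1 v2. v = VCons a v1 v2 \<and> f a = b \<and> map_val f v1 = u1 \<and> map_val f v2 = u2)" by (cases v) auto
lemma er_VRec: "map_val f v = VRec fs b \<longleftrightarrow> (\<exists>a gs. v = VRec gs a \<and> f a = b \<and> map (map_prod id (map_val f)) gs = fs)"
  by (cases v) auto
lemma er_EVar: "map_elim f s = EVar x k \<longleftrightarrow> (\<exists>k'. s = EVar x k' \<and> map_cont f k' = k)" by (cases s) auto
lemma er_EBool: "map_elim f s = EBool k1 k2 \<longleftrightarrow> (\<exists>k1' k2'. s = EBool k1' k2' \<and> map_cont f k1' = k1 \<and> map_cont f k2' = k2)" by (cases s) auto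
lemma er_EList: "map_elim f s = EList k1 s2 \<longleftrightarrow> (\<exists>k1' s2'. s = EList k1' s2' \<and> map_cont f k1' = k1 \<and> map_elim f s2' = s2)" by (cases s) auto
lemma er_ERec: "map_elim f s = ERec xs k \<longleftrightarrow> (\<exists>k'. s = ERec xs k' \<and> map_cont f k' = k)" by (cases s) auto
lemma er_CElim: "map_cont f c = CElim s \<longleftrightarrow> (\<exists>s'. c = CElim s' \<and> map_elim f s' = s)" by (cases c) auto

lemma match_tgt: "matches w vr sr rr kr \<Longrightarrow> tgt w sr = kr \<and> mlen w = length rr"
proof (induction rule: matches.induct)
  case (m_rec ws fs xs \<kappa>0 \<rho> \<sigma>' wk vk \<rho>' \<kappa> x)
  then show ?case by (auto simp: tgt.simps(6) mlen.simps(6))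
qed (auto simp: tgt.simps(6) mlen.simps(6))

lemma map_snoc_inv: "map f gs = fs @ [y] \<Longrightarrow> \<exists>gs' g. gs = gs' @ [g] \<and> map f gs' = fs \<and> f g = y"
  by (cases gs rule: rev_cases) auto

lemma fwd_rec_snoc: "fwd (MRec (ws@[(x,wk)])) (VRec (gs@[(y,u)]) a) (ERec (xs@[z]) k0) =
  (let (\<rho>,\<sigma>',\<beta>) = fwd (MRec ws) (VRec gs top) (ERec xs k0); (\<rho>',\<kappa>,\<beta>') = fwd wk u (elim_of \<sigma>')
   in (\<rho>@\<rho>', \<kappa>, inf (inf a \<beta>) \<beta>'))"
  by (subst fwd.simps(6)) simp

lemma fwd_sel: "matches w vr sr rr kr \<Longrightarrow>
   (\<forall>(v :: 'a::bounded_lattice val) \<sigma>. erase_val v = vr \<and> erase_elim \<sigma> = sr \<longrightarrow>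
        erase_env (fst (fwd w v \<sigma>)) = rr \<and> erase_cont (fst (snd (fwd w v \<sigma>))) = kr)"
proof (induction rule: matches.induct)
  case (m_cons w1 v1 \<sigma>1 \<rho>1 \<tau> w2 v2 \<rho>2 \<kappa> \<kappa>0)
  show ?case
  proof (intro allI impI)
    fix v :: "'a val" and \<sigma> :: "'a elim" assume "erase_val v = VCons () v1 v2 \<and> erase_elim \<sigma> = EList \<kappa>0 \<sigma>1"
    then obtain a u1 u2 k0 s1 where v: "v = VCons a u1 u2" "erase_val u1 = v1" "erase_val u2 = v2"
      and s: "\<sigma> = EList k0 s1" "erase_elim s1 = \<sigma>1" by (auto simp: er_VCons er_EList)
    obtain \<rho>1' t \<beta> where f1: "fwd w1 u1 s1 = (\<rho>1', t, \<beta>)" by (cases "fwd w1 u1 s1") auto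
    with m_cons.IH(1) v s have "erase_env \<rho>1' = \<rho>1" "erase_cont t = CElim \<tau>" by force+
    then obtain t' where t: "t = CElim t'" "erase_elim t' = \<tau>" by (auto simp: er_CElim)
    obtain \<rho>2' k \<beta>' where f2: "fwd w2 u2 t' = (\<rho>2', k, \<beta>')" by (cases "fwd w2 u2 t'") auto
    with m_cons.IH(2) v t have "erase_env \<rho>2' = \<rho>2" "erase_cont k = \<kappa>" by force+
    then show "erase_env (fst (fwd (MCons w1 w2) v \<sigma>)) = \<rho>1 @ \<rho>2 \<and> erase_cont (fst (snd (fwd (MCons w1 w2) v \<sigma>))) = \<kappa>"
      using v s f1 f2 t \<open>erase_env \<rho>1' = \<rho>1\<close> by simp
  qed
next
  case (m_rec ws fs xs \<kappa>0 \<rho> \<sigma>' wk vk \<rho>' \<kappa> x)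
  show ?case
  proof (intro allI impI)
    fix v :: "'a val" and \<sigma> :: "'a elim" assume "erase_val v = VRec (fs @ [(x, vk)]) () \<and> erase_elim \<sigma> = ERec (xs @ [x]) \<kappa>0"
    then obtain a gs u k0 where v: "v = VRec (gs @ [(x, u)]) a" "map (map_prod id erase_val) gs = fs" "erase_val u = vk"
      and s: "\<sigma> = ERec (xs @ [x]) k0" "erase_cont k0 = \<kappa>0"
      by (auto simp: er_VRec er_ERec dest!: map_snoc_inv)
    obtain \<rho>1' t \<beta> where f1: "fwd (MRec ws) (VRec gs top) (ERec xs k0) = (\<rho>1', t, \<beta>)"
      by (cases "fwd (MRec ws) (VRec gs top) (ERec xs k0)") auto
    have h1: "erase_val (VRec gs (top::'a)) = VRec fs ()" using v by simp
    have h2: "erase_elim (ERec xs k0) = ERec xs \<kappa>0" using s by simp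
    from m_rec.IH(1)[rule_format, OF conjI[OF h1 h2]] f1
    have "erase_env \<rho>1' = \<rho>" "erase_cont t = CElim \<sigma>'" by simp_all
    then obtain t' where t: "t = CElim t'" "erase_elim t' = \<sigma>'" by (auto simp: er_CElim)
    obtain \<rho>2' k \<beta>' where f2: "fwd wk u t' = (\<rho>2', k, \<beta>')" by (cases "fwd wk u t'") auto
    with m_rec.IH(2) v t have "erase_env \<rho>2' = \<rho>'" "erase_cont k = \<kappa>" by force+
    then show "erase_env (fst (fwd (MRec (ws @ [(x, wk)])) v \<sigma>)) = \<rho> @ \<rho>' \<and> erase_cont (fst (snd (fwd (MRec (ws @ [(x, wk)])) v \<sigma>))) = \<kappa>"
      using v s f1 f2 t \<open>erase_env \<rho>1' = \<rho>\<close> by (simp add: fwd_rec_snoc)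
  qed
qed (auto simp: er_EVar er_EBool er_EList er_ERec fwd.simps(6))

lemma bwd_rec_snoc: "bwd (MRec (ws@[(x,wk)])) (ERec (xs@[z]) k0) \<rho> \<kappa> \<alpha> =
  (let (vk, \<sigma>') = bwd wk (elim_of (tgt (MRec ws) (ERec xs k0))) (drop (mlen (MRec ws)) \<rho>) \<kappa> \<alpha>;
       (v', s') = bwd (MRec ws) (ERec xs k0) (take (mlen (MRec ws)) \<rho>) (CElim \<sigma>') \<alpha>
   in (VRec (rec_fields v' @ [(x, vk)]) \<alpha>, ERec (xs@[z]) (rec_cont s')))"
  by (subst bwd.simps(6)) (simp add: Let_def)

lemma unit_map_cont[simp]: "map_cont (\<lambda>_::unit. ()) k = k"
proof -
  have "(\<lambda>_::unit. ()) = id" by auto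
  then show ?thesis by (simp add: cont.map_id)
qed
lemma unit_map_elim[simp]: "map_elim (\<lambda>_::unit. ()) k = k"
proof -
  have "(\<lambda>_::unit. ()) = id" by auto
  then show ?thesis by (simp add: elim.map_id)
qed

lemma env_split: "erase_env \<rho> = r1 @ r2 \<Longrightarrow> erase_env (take (length r1) \<rho>) = r1 \<and> erase_env (drop (length r1) \<rho>) = r2"
  by (metis append_eq_conv_conj take_map drop_map)

lemma bwd_sel: "matches w vr sr rr kr \<Longrightarrow>
   (\<forall>(\<rho> :: 'a::bounded_lattice env) \<kappa> \<alpha>. erase_env \<rho> = rr \<and> erase_cont \<kappa> = kr \<longrightarrow>
        erase_val (fst (bwd w sr \<rho> \<kappa> \<alpha>)) = vr \<and> erase_elim (snd (bwd w sr \<rho> \<kappa> \<alpha>)) = sr)"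
proof (induction rule: matches.induct)
  case (m_cons w1 v1 \<sigma>1 \<rho>1 \<tau> w2 v2 \<rho>2 \<kappa> \<kappa>0)
  show ?case
  proof (intro allI impI)
    fix \<rho> :: "'a env" and \<kappa>' :: "'a cont" and \<alpha> :: 'a
    assume a: "erase_env \<rho> = \<rho>1 @ \<rho>2 \<and> erase_cont \<kappa>' = \<kappa>"
    have t1: "tgt w1 \<sigma>1 = CElim \<tau>" "mlen w1 = length \<rho>1" using match_tgt[OF m_cons.hyps(1)] by auto
    have sp: "erase_env (take (mlen w1) \<rho>) = \<rho>1" "erase_env (drop (mlen w1) \<rho>) = \<rho>2"
      using env_split[of \<rho> \<rho>1 \<rho>2] a t1 by auto
    obtain u2 t where b2: "bwd w2 \<tau> (drop (mlen w1) \<rho>) \<kappa>' \<alpha> = (u2, t)" by fastforce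
    with m_cons.IH(2)[rule_format, OF conjI[OF sp(2)], of \<kappa>' \<alpha>] a
    have e2: "erase_val u2 = v2" "erase_elim t = \<tau>" by auto
    obtain u1 s1 where b1: "bwd w1 \<sigma>1 (take (mlen w1) \<rho>) (CElim t) \<alpha> = (u1, s1)" by fastforce
    with m_cons.IH(1)[rule_format, OF conjI[OF sp(1)], of "CElim t" \<alpha>] e2
    have e1: "erase_val u1 = v1" "erase_elim s1 = \<sigma>1" by auto
    show "erase_val (fst (bwd (MCons w1 w2) (EList \<kappa>0 \<sigma>1) \<rho> \<kappa>' \<alpha>)) = VCons () v1 v2 \<and>
        erase_elim (snd (bwd (MCons w1 w2) (EList \<kappa>0 \<sigma>1) \<rho> \<kappa>' \<alpha>)) = EList \<kappa>0 \<sigma>1"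
      using b1 b2 e1 e2 t1 by (simp add: cont.map_comp o_def)
  qed
next
  case (m_rec ws fs xs \<kappa>0 \<rho>1 \<sigma>' wk vk \<rho>2 \<kappa> x)
  show ?case
  proof (intro allI impI)
    fix \<rho> :: "'a env" and \<kappa>' :: "'a cont" and \<alpha> :: 'a
    assume a: "erase_env \<rho> = \<rho>1 @ \<rho>2 \<and> erase_cont \<kappa>' = \<kappa>"
    have t1: "tgt (MRec ws) (ERec xs \<kappa>0) = CElim \<sigma>'" "mlen (MRec ws) = length \<rho>1" using match_tgt[OF m_rec.hyps(1)] by auto
    have sp: "erase_env (take (mlen (MRec ws)) \<rho>) = \<rho>1" "erase_env (drop (mlen (MRec ws)) \<rho>) = \<rho>2"
      using env_split[of \<rho> \<rho>1 \<rho>2] a t1 by auto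
    obtain u2 t where b2: "bwd wk \<sigma>' (drop (mlen (MRec ws)) \<rho>) \<kappa>' \<alpha> = (u2, t)" by fastforce
    with m_rec.IH(2)[rule_format, OF conjI[OF sp(2)], of \<kappa>' \<alpha>] a
    have e2: "erase_val u2 = vk" "erase_elim t = \<sigma>'" by auto
    obtain u1 s1 where b1: "bwd (MRec ws) (ERec xs \<kappa>0) (take (mlen (MRec ws)) \<rho>) (CElim t) \<alpha> = (u1, s1)" by fastforce
    with m_rec.IH(1)[rule_format, OF conjI[OF sp(1)], of "CElim t" \<alpha>] e2
    have e1: "erase_val u1 = VRec fs ()" "erase_elim s1 = ERec xs \<kappa>0" by auto
    then obtain gs b k where u1: "u1 = VRec gs b" "map (map_prod id erase_val) gs = fs" and s1: "s1 = ERec xs k" "erase_cont k = \<kappa>0"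
      by (auto simp: er_VRec er_ERec)
    show "erase_val (fst (bwd (MRec (ws @ [(x, wk)])) (ERec (xs @ [x]) \<kappa>0) \<rho> \<kappa>' \<alpha>)) = VRec (fs @ [(x, vk)]) () \<and>
        erase_elim (snd (bwd (MRec (ws @ [(x, wk)])) (ERec (xs @ [x]) \<kappa>0) \<rho> \<kappa>' \<alpha>)) = ERec (xs @ [x]) \<kappa>0"
      using b1 b2 e1 e2 t1 u1 s1 by (simp add: bwd_rec_snoc)
  qed
qed (auto simp: cont.map_comp elim.map_comp o_def bwd.simps(6))

lemma leq_val_refl[simp]: "leq_val (v::'a::order val) v" by (rule val.rel_refl) simp
lemma leq_elim_refl[simp]: "leq_elim (v::'a::order elim) v" by (rule elim.rel_refl) simp
lemma leq_cont_refl[simp]: "leq_cont (v::'a::order cont) v" by (rule cont.rel_refl) simp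
lemma leq_env_refl[simp]: "leq_env (v::'a::order env) v"
  by (rule list.rel_refl) (auto simp: rel_prod_sel)

lemma leq_val_trans: assumes "leq_val (a::'a::order val) b" "leq_val b c" shows "leq_val a c"
proof -
  have "(rel_val (\<le>) OO rel_val (\<le>)) a c" using assms by blast
  then have "rel_val ((\<le>) OO (\<le>)) a c" by (simp add: val.rel_compp)
  then show ?thesis by (rule val.rel_mono_strong) auto
qed
lemma leq_elim_trans: assumes "leq_elim (a::'a::order elim) b" "leq_elim b c" shows "leq_elim a c"
proof -
  have "(rel_elim (\<le>) OO rel_elim (\<le>)) a c" using assms by blast
  then have "rel_elim ((\<le>) OO (\<le>)) a c" by (simp add: elim.rel_compp)
  then show ?thesis by (rule elim.rel_mono_strong) auto
qed
lemma leq_cont_trans: assumes "leq_cont (a::'a::order cont) b" "leq_cont b c" shows "leq_cont a c"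
proof -
  have "(rel_cont (\<le>) OO rel_cont (\<le>)) a c" using assms by blast
  then have "rel_cont ((\<le>) OO (\<le>)) a c" by (simp add: cont.rel_compp)
  then show ?thesis by (rule cont.rel_mono_strong) auto
qed
lemma leq_env_trans: assumes "leq_env (a::'a::order env) b" "leq_env b c" shows "leq_env a c"
  by (rule list_all2_trans[OF _ assms]) (auto simp: rel_prod_sel intro: leq_val_trans)

lemma bot_leq_cont: "leq_cont (bot_cont (erase_cont k)) (k::'a::bounded_lattice cont)"
  by (simp add: cont.rel_map cont.map_comp o_def) (rule cont.rel_refl, simp)
lemma bot_leq_elim: "leq_elim (bot_elim (erase_elim k)) (k::'a::bounded_lattice elim)"
  by (simp add: elim.rel_map elim.map_comp o_def) (rule elim.rel_refl, simp)

lemma fwd_mono: "matches w vr sr rr kr \<Longrightarrow>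
   (\<forall>(v :: 'a::bounded_lattice val) \<sigma> v' \<sigma>'. erase_val v = vr \<and> erase_elim \<sigma> = sr \<and> erase_val v' = vr \<and> erase_elim \<sigma>' = sr
     \<and> leq_val v v' \<and> leq_elim \<sigma> \<sigma>' \<longrightarrow> leq_RKA (fwd w v \<sigma>) (fwd w v' \<sigma>'))"
proof (induction rule: matches.induct)
  case (m_cons w1 v1 \<sigma>1 \<rho>1 \<tau> w2 v2 \<rho>2 \<kappa> \<kappa>0)
  show ?case
  proof (intro allI impI)
    fix v v' :: "'a val" and \<sigma> \<sigma>' :: "'a elim"
    assume A: "erase_val v = VCons () v1 v2 \<and> erase_elim \<sigma> = EList \<kappa>0 \<sigma>1 \<and> erase_val v' = VCons () v1 v2 \<and> erase_elim \<sigma>' = EList \<kappa>0 \<sigma>1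
     \<and> leq_val v v' \<and> leq_elim \<sigma> \<sigma>'"
    then obtain a u1 u2 k0 s1 where v: "v = VCons a u1 u2" "erase_val u1 = v1" "erase_val u2 = v2"
      and s: "\<sigma> = EList k0 s1" "erase_elim s1 = \<sigma>1" by (auto simp: er_VCons er_EList)
    from A obtain a' u1' u2' k0' s1' where v': "v' = VCons a' u1' u2'" "erase_val u1' = v1" "erase_val u2' = v2"
      and s': "\<sigma>' = EList k0' s1'" "erase_elim s1' = \<sigma>1" by (auto simp: er_VCons er_EList)
    from A v s v' s' have le: "a \<le> a'" "leq_val u1 u1'" "leq_val u2 u2'" "leq_elim s1 s1'" by auto
    obtain \<rho>a t \<beta> where f1: "fwd w1 u1 s1 = (\<rho>a, t, \<beta>)" by (cases "fwd w1 u1 s1") auto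
    obtain \<rho>a' t2 \<beta>2 where f1': "fwd w1 u1' s1' = (\<rho>a', t2, \<beta>2)" by (cases "fwd w1 u1' s1'") auto
    have L1: "leq_env \<rho>a \<rho>a'" "leq_cont t t2" "\<beta> \<le> \<beta>2"
      using m_cons.IH(1)[rule_format, of u1 s1 u1' s1'] v s v' s' le f1 f1' by (auto simp: leq_RKA_def)
    have "erase_cont t = CElim \<tau>" using fwd_sel[OF m_cons.hyps(1)] v s f1 by force
    then obtain tt where t: "t = CElim tt" "erase_elim tt = \<tau>" by (auto simp: er_CElim)
    have "erase_cont t2 = CElim \<tau>" using fwd_sel[OF m_cons.hyps(1)] v' s' f1' by force
    then obtain tt2 where t2: "t2 = CElim tt2" "erase_elim tt2 = \<tau>" by (auto simp: er_CElim)
    have ltt: "leq_elim tt tt2" using L1(2) t t2 by simp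
    obtain \<rho>b k \<beta>' where f2: "fwd w2 u2 tt = (\<rho>b, k, \<beta>')" by (cases "fwd w2 u2 tt") auto
    obtain \<rho>b' k' \<beta>2' where f2': "fwd w2 u2' tt2 = (\<rho>b', k', \<beta>2')" by (cases "fwd w2 u2' tt2") auto
    have L2: "leq_env \<rho>b \<rho>b'" "leq_cont k k'" "\<beta>' \<le> \<beta>2'"
      using m_cons.IH(2)[rule_format, of u2 tt u2' tt2] v s v' s' le f2 f2' t t2 ltt by (auto simp: leq_RKA_def)
    have "inf (inf a \<beta>) \<beta>' \<le> inf (inf a' \<beta>2) \<beta>2'" using le L1 L2 by (intro inf_mono) auto
    then show "leq_RKA (fwd (MCons w1 w2) v \<sigma>) (fwd (MCons w1 w2) v' \<sigma>')"
      using v s v' s' f1 f1' f2 f2' t t2 L1 L2 le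
      by (auto simp: leq_RKA_def intro!: list_all2_appendI)
  qed
next
  case (m_rec ws fs xs \<kappa>0 \<rho>1 \<sigma>' wk vk \<rho>2 \<kappa> x)
  show ?case
  proof (intro allI impI)
    fix v v' :: "'a val" and \<sigma> \<sigma>2 :: "'a elim"
    assume A: "erase_val v = VRec (fs @ [(x, vk)]) () \<and> erase_elim \<sigma> = ERec (xs @ [x]) \<kappa>0 \<and>
      erase_val v' = VRec (fs @ [(x, vk)]) () \<and> erase_elim \<sigma>2 = ERec (xs @ [x]) \<kappa>0 \<and> leq_val v v' \<and> leq_elim \<sigma> \<sigma>2"
    then obtain a gs u k0 where v: "v = VRec (gs @ [(x, u)]) a" "map (map_prod id erase_val) gs = fs" "erase_val u = vk"
      and s: "\<sigma> = ERec (xs @ [x]) k0" "erase_cont k0 = \<kappa>0"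
      by (auto simp: er_VRec er_ERec dest!: map_snoc_inv)
    from A obtain a' gs' u' k0' where v': "v' = VRec (gs' @ [(x, u')]) a'" "map (map_prod id erase_val) gs' = fs" "erase_val u' = vk"
      and s': "\<sigma>2 = ERec (xs @ [x]) k0'" "erase_cont k0' = \<kappa>0"
      by (auto simp: er_VRec er_ERec dest!: map_snoc_inv)
    have lg: "list_all2 (rel_prod (=) leq_val) (gs @ [(x, u)]) (gs' @ [(x, u')])" "a \<le> a'"
      using A v v' by auto
    have len: "length gs = length gs'" using list_all2_lengthD[OF lg(1)] by simp
    have le: "list_all2 (rel_prod (=) leq_val) gs gs'" "leq_val u u'" "leq_cont k0 k0'"
      using lg(1) len A s s' by (auto simp: list_all2_append)
    have h1: "erase_val (VRec gs (top::'a)) = VRec fs ()" "erase_val (VRec gs' (top::'a)) = VRec fs ()" using v v' by simp_all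
    have h2: "erase_elim (ERec xs k0) = ERec xs \<kappa>0" "erase_elim (ERec xs k0') = ERec xs \<kappa>0" using s s' by simp_all
    obtain \<rho>a t \<beta> where f1: "fwd (MRec ws) (VRec gs top) (ERec xs k0) = (\<rho>a, t, \<beta>)" by (cases "fwd (MRec ws) (VRec gs top) (ERec xs k0)") auto
    obtain \<rho>a' t2 \<beta>2 where f1': "fwd (MRec ws) (VRec gs' top) (ERec xs k0') = (\<rho>a', t2, \<beta>2)" by (cases "fwd (MRec ws) (VRec gs' top) (ERec xs k0')") auto
    have L1: "leq_env \<rho>a \<rho>a'" "leq_cont t t2" "\<beta> \<le> \<beta>2"
      using m_rec.IH(1)[rule_format, of "VRec gs top" "ERec xs k0" "VRec gs' top" "ERec xs k0'"] h1 h2 le f1 f1' by (auto simp: leq_RKA_def)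
    have "erase_cont t = CElim \<sigma>'" using fwd_sel[OF m_rec.hyps(1), rule_format, OF conjI[OF h1(1) h2(1)]] f1 by simp
    then obtain tt where t: "t = CElim tt" "erase_elim tt = \<sigma>'" by (auto simp: er_CElim)
    have "erase_cont t2 = CElim \<sigma>'" using fwd_sel[OF m_rec.hyps(1), rule_format, OF conjI[OF h1(2) h2(2)]] f1' by simp
    then obtain tt2 where t2: "t2 = CElim tt2" "erase_elim tt2 = \<sigma>'" by (auto simp: er_CElim)
    have ltt: "leq_elim tt tt2" using L1(2) t t2 by simp
    obtain \<rho>b k \<beta>' where f2: "fwd wk u tt = (\<rho>b, k, \<beta>')" by (cases "fwd wk u tt") auto
    obtain \<rho>b' k' \<beta>2' where f2': "fwd wk u' tt2 = (\<rho>b', k', \<beta>2')" by (cases "fwd wk u' tt2") auto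
    have L2: "leq_env \<rho>b \<rho>b'" "leq_cont k k'" "\<beta>' \<le> \<beta>2'"
      using m_rec.IH(2)[rule_format, of u tt u' tt2] v v' le f2 f2' t t2 ltt by (auto simp: leq_RKA_def)
    have "inf (inf a \<beta>) \<beta>' \<le> inf (inf a' \<beta>2) \<beta>2'" using lg L1 L2 by (intro inf_mono) auto
    then show "leq_RKA (fwd (MRec (ws @ [(x, wk)])) v \<sigma>) (fwd (MRec (ws @ [(x, wk)])) v' \<sigma>2)"
      using v s v' s' f1 f1' f2 f2' t t2 L1 L2 lg
      by (auto simp: leq_RKA_def fwd_rec_snoc intro!: list_all2_appendI)
  qed
qed (auto simp: leq_RKA_def er_EVar er_EBool er_EList er_ERec er_VTrue er_VFalse er_VNil er_VRec fwd.simps(6))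

lemma leq_env_split: "leq_env \<rho> \<rho>' \<Longrightarrow> leq_env (take n \<rho>) (take n \<rho>') \<and> leq_env (drop n \<rho>) (drop n \<rho>')"
  by (simp add: list_all2_takeI list_all2_dropI)

lemma bwd_mono: "matches w vr sr rr kr \<Longrightarrow>
   (\<forall>(\<rho> :: 'a::bounded_lattice env) \<kappa> \<alpha> \<rho>' \<kappa>' \<alpha>'. erase_env \<rho> = rr \<and> erase_cont \<kappa> = kr \<and> erase_env \<rho>' = rr \<and> erase_cont \<kappa>' = kr
     \<and> leq_env \<rho> \<rho>' \<and> leq_cont \<kappa> \<kappa>' \<and> \<alpha> \<le> \<alpha>' \<longrightarrow> leq_VS (bwd w sr \<rho> \<kappa> \<alpha>) (bwd w sr \<rho>' \<kappa>' \<alpha>'))"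
proof (induction rule: matches.induct)
  case (m_cons w1 v1 \<sigma>1 \<rho>1 \<tau> w2 v2 \<rho>2 \<kappa> \<kappa>0)
  show ?case
  proof (intro allI impI)
    fix \<rho> \<rho>' :: "'a env" and k k' :: "'a cont" and \<alpha> \<alpha>' :: 'a
    assume a: "erase_env \<rho> = \<rho>1 @ \<rho>2 \<and> erase_cont k = \<kappa> \<and> erase_env \<rho>' = \<rho>1 @ \<rho>2 \<and> erase_cont k' = \<kappa>
      \<and> leq_env \<rho> \<rho>' \<and> leq_cont k k' \<and> \<alpha> \<le> \<alpha>'"
    have t1: "tgt w1 \<sigma>1 = CElim \<tau>" "mlen w1 = length \<rho>1" using match_tgt[OF m_cons.hyps(1)] by auto
    have sp: "erase_env (take (mlen w1) \<rho>) = \<rho>1" "erase_env (drop (mlen w1) \<rho>) = \<rho>2"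
      using env_split[of \<rho> \<rho>1 \<rho>2] a t1 by auto
    have sp': "erase_env (take (mlen w1) \<rho>') = \<rho>1" "erase_env (drop (mlen w1) \<rho>') = \<rho>2"
      using env_split[of \<rho>' \<rho>1 \<rho>2] a t1 by auto
    have ls: "leq_env (take (mlen w1) \<rho>) (take (mlen w1) \<rho>')" "leq_env (drop (mlen w1) \<rho>) (drop (mlen w1) \<rho>')"
      using leq_env_split a by blast+
    obtain u2 t where b2: "bwd w2 \<tau> (drop (mlen w1) \<rho>) k \<alpha> = (u2, t)" by fastforce
    obtain u2' t' where b2': "bwd w2 \<tau> (drop (mlen w1) \<rho>') k' \<alpha>' = (u2', t')" by fastforce
    have e2: "erase_elim t = \<tau>" "erase_elim t' = \<tau>"
      using bwd_sel[OF m_cons.hyps(2), rule_format, of "drop (mlen w1) \<rho>" k \<alpha>]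
        bwd_sel[OF m_cons.hyps(2), rule_format, of "drop (mlen w1) \<rho>'" k' \<alpha>'] b2 b2' sp sp' a by auto
    have L2: "leq_val u2 u2'" "leq_elim t t'"
      using m_cons.IH(2)[rule_format, of "drop (mlen w1) \<rho>" k "drop (mlen w1) \<rho>'" k' \<alpha> \<alpha>'] sp sp' ls a b2 b2'
      by (auto simp: leq_VS_def)
    obtain u1 s1 where b1: "bwd w1 \<sigma>1 (take (mlen w1) \<rho>) (CElim t) \<alpha> = (u1, s1)" by fastforce
    obtain u1' s1' where b1': "bwd w1 \<sigma>1 (take (mlen w1) \<rho>') (CElim t') \<alpha>' = (u1', s1')" by fastforce
    have L1: "leq_val u1 u1'" "leq_elim s1 s1'"
      using m_cons.IH(1)[rule_format, of "take (mlen w1) \<rho>" "CElim t" "take (mlen w1) \<rho>'" "CElim t'" \<alpha> \<alpha>'] sp sp' ls a b1 b1' e2 L2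
      by (auto simp: leq_VS_def)
    show "leq_VS (bwd (MCons w1 w2) (EList \<kappa>0 \<sigma>1) \<rho> k \<alpha>) (bwd (MCons w1 w2) (EList \<kappa>0 \<sigma>1) \<rho>' k' \<alpha>')"
      using b1 b2 b1' b2' L1 L2 t1 a by (simp add: leq_VS_def)
  qed
next
  case (m_rec ws fs xs \<kappa>0 \<rho>1 \<sigma>m wk vk \<rho>2 \<kappa> x)
  show ?case
  proof (intro allI impI)
    fix \<rho> \<rho>' :: "'a env" and k k' :: "'a cont" and \<alpha> \<alpha>' :: 'a
    assume a: "erase_env \<rho> = \<rho>1 @ \<rho>2 \<and> erase_cont k = \<kappa> \<and> erase_env \<rho>' = \<rho>1 @ \<rho>2 \<and> erase_cont k' = \<kappa>
      \<and> leq_env \<rho> \<rho>' \<and> leq_cont k k' \<and> \<alpha> \<le> \<alpha>'"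
    let ?n = "mlen (MRec ws)"
    have t1: "tgt (MRec ws) (ERec xs \<kappa>0) = CElim \<sigma>m" "?n = length \<rho>1" using match_tgt[OF m_rec.hyps(1)] by auto
    have sp: "erase_env (take ?n \<rho>) = \<rho>1" "erase_env (drop ?n \<rho>) = \<rho>2"
      using env_split[of \<rho> \<rho>1 \<rho>2] a t1 by auto
    have sp': "erase_env (take ?n \<rho>') = \<rho>1" "erase_env (drop ?n \<rho>') = \<rho>2"
      using env_split[of \<rho>' \<rho>1 \<rho>2] a t1 by auto
    have ls: "leq_env (take ?n \<rho>) (take ?n \<rho>')" "leq_env (drop ?n \<rho>) (drop ?n \<rho>')"
      using leq_env_split a by blast+
    obtain u2 t where b2: "bwd wk \<sigma>m (drop ?n \<rho>) k \<alpha> = (u2, t)" by fastforce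
    obtain u2' t' where b2': "bwd wk \<sigma>m (drop ?n \<rho>') k' \<alpha>' = (u2', t')" by fastforce
    have e2: "erase_elim t = \<sigma>m" "erase_elim t' = \<sigma>m"
      using bwd_sel[OF m_rec.hyps(2), rule_format, of "drop ?n \<rho>" k \<alpha>]
        bwd_sel[OF m_rec.hyps(2), rule_format, of "drop ?n \<rho>'" k' \<alpha>'] b2 b2' sp sp' a by auto
    have L2: "leq_val u2 u2'" "leq_elim t t'"
      using m_rec.IH(2)[rule_format, of "drop ?n \<rho>" k "drop ?n \<rho>'" k' \<alpha> \<alpha>'] sp sp' ls a b2 b2'
      by (auto simp: leq_VS_def)
    obtain u1 s1 where b1: "bwd (MRec ws) (ERec xs \<kappa>0) (take ?n \<rho>) (CElim t) \<alpha> = (u1, s1)" by fastforce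
    obtain u1' s1' where b1': "bwd (MRec ws) (ERec xs \<kappa>0) (take ?n \<rho>') (CElim t') \<alpha>' = (u1', s1')" by fastforce
    have L1: "leq_val u1 u1'" "leq_elim s1 s1'"
      using m_rec.IH(1)[rule_format, of "take ?n \<rho>" "CElim t" "take ?n \<rho>'" "CElim t'" \<alpha> \<alpha>'] sp sp' ls a b1 b1' e2 L2
      by (auto simp: leq_VS_def)
    have "erase_val u1 = VRec fs ()" "erase_elim s1 = ERec xs \<kappa>0"
      using bwd_sel[OF m_rec.hyps(1), rule_format, of "take ?n \<rho>" "CElim t" \<alpha>] sp e2 b1 by auto
    then obtain gs b c where u1: "u1 = VRec gs b" and s1: "s1 = ERec xs c"
      by (auto simp: er_VRec er_ERec)
    have "erase_val u1' = VRec fs ()" "erase_elim s1' = ERec xs \<kappa>0"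
      using bwd_sel[OF m_rec.hyps(1), rule_format, of "take ?n \<rho>'" "CElim t'" \<alpha>'] sp' e2 b1' by auto
    then obtain gs' b' c' where u1': "u1' = VRec gs' b'" and s1': "s1' = ERec xs c'"
      by (auto simp: er_VRec er_ERec)
    show "leq_VS (bwd (MRec (ws @ [(x, wk)])) (ERec (xs @ [x]) \<kappa>0) \<rho> k \<alpha>) (bwd (MRec (ws @ [(x, wk)])) (ERec (xs @ [x]) \<kappa>0) \<rho>' k' \<alpha>')"
      using b1 b2 b1' b2' L1 L2 t1 a u1 u1' s1 s1' by (auto simp: leq_VS_def bwd_rec_snoc intro!: list_all2_appendI)
  qed
qed (auto simp: leq_VS_def bwd.simps(6) map_eq_Cons_conv)

lemma take_drop_leq: "leq_env (take n \<rho>) a \<Longrightarrow> leq_env (drop n \<rho>) b \<Longrightarrow> leq_env \<rho> (a @ b)"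
  by (metis append_take_drop_id list_all2_appendI)

lemma fwd_bwd: "matches w vr sr rr kr \<Longrightarrow>
   (\<forall>(\<rho> :: 'a::bounded_lattice env) \<kappa> \<alpha>. erase_env \<rho> = rr \<and> erase_cont \<kappa> = kr \<longrightarrow>
        leq_RKA (\<rho>, \<kappa>, \<alpha>) (case bwd w sr \<rho> \<kappa> \<alpha> of (v, \<sigma>) \<Rightarrow> fwd w v \<sigma>))"
proof (induction rule: matches.induct)
  case (m_cons w1 v1 \<sigma>1 \<rho>1 \<tau> w2 v2 \<rho>2 \<kappa> \<kappa>0)
  show ?case
  proof (intro allI impI)
    fix \<rho> :: "'a env" and k :: "'a cont" and \<alpha> :: 'a
    assume a: "erase_env \<rho> = \<rho>1 @ \<rho>2 \<and> erase_cont k = \<kappa>"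
    have t1: "tgt w1 \<sigma>1 = CElim \<tau>" "mlen w1 = length \<rho>1" using match_tgt[OF m_cons.hyps(1)] by auto
    have sp: "erase_env (take (mlen w1) \<rho>) = \<rho>1" "erase_env (drop (mlen w1) \<rho>) = \<rho>2"
      using env_split[of \<rho> \<rho>1 \<rho>2] a t1 by auto
    obtain u2 t where b2: "bwd w2 \<tau> (drop (mlen w1) \<rho>) k \<alpha> = (u2, t)" by fastforce
    have e2: "erase_val u2 = v2" "erase_elim t = \<tau>"
      using bwd_sel[OF m_cons.hyps(2), rule_format, of "drop (mlen w1) \<rho>" k \<alpha>] b2 sp a by auto
    obtain u1 s1 where b1: "bwd w1 \<sigma>1 (take (mlen w1) \<rho>) (CElim t) \<alpha> = (u1, s1)" by fastforce
    have e1: "erase_val u1 = v1" "erase_elim s1 = \<sigma>1"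
      using bwd_sel[OF m_cons.hyps(1), rule_format, of "take (mlen w1) \<rho>" "CElim t" \<alpha>] b1 sp e2 by auto
    obtain \<rho>a tt \<beta> where f1: "fwd w1 u1 s1 = (\<rho>a, tt, \<beta>)" by (cases "fwd w1 u1 s1") auto
    have L1: "leq_env (take (mlen w1) \<rho>) \<rho>a" "leq_cont (CElim t) tt" "\<alpha> \<le> \<beta>"
      using m_cons.IH(1)[rule_format, of "take (mlen w1) \<rho>" "CElim t" \<alpha>] sp e2 b1 f1 by (auto simp: leq_RKA_def)
    have "erase_cont tt = CElim \<tau>" using fwd_sel[OF m_cons.hyps(1), rule_format, of u1 s1] e1 f1 by auto
    then obtain t3 where t3: "tt = CElim t3" "erase_elim t3 = \<tau>" by (auto simp: er_CElim)
    have lt: "leq_elim t t3" using L1(2) t3 by simp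
    obtain \<rho>c kc \<beta>c where fc: "fwd w2 u2 t = (\<rho>c, kc, \<beta>c)" by (cases "fwd w2 u2 t") auto
    obtain \<rho>b kb \<beta>' where f2: "fwd w2 u2 t3 = (\<rho>b, kb, \<beta>')" by (cases "fwd w2 u2 t3") auto
    have M: "leq_env \<rho>c \<rho>b" "leq_cont kc kb" "\<beta>c \<le> \<beta>'"
      using fwd_mono[OF m_cons.hyps(2), rule_format, of u2 t u2 t3] e2 t3 lt fc f2 by (auto simp: leq_RKA_def)
    have L2: "leq_env (drop (mlen w1) \<rho>) \<rho>c" "leq_cont k kc" "\<alpha> \<le> \<beta>c"
      using m_cons.IH(2)[rule_format, of "drop (mlen w1) \<rho>" k \<alpha>] sp a b2 fc by (auto simp: leq_RKA_def)
    have "leq_env \<rho> (\<rho>a @ \<rho>b)" using take_drop_leq[OF L1(1) leq_env_trans[OF L2(1) M(1)]] .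
    moreover have "leq_cont k kb" using leq_cont_trans[OF L2(2) M(2)] .
    moreover have "\<alpha> \<le> inf (inf \<alpha> \<beta>) \<beta>'" using L1(3) L2(3) M(3) by simp
    ultimately show "leq_RKA (\<rho>, k, \<alpha>) (case bwd (MCons w1 w2) (EList \<kappa>0 \<sigma>1) \<rho> k \<alpha> of (v, \<sigma>) \<Rightarrow> fwd (MCons w1 w2) v \<sigma>)"
      using b1 b2 f1 f2 t3 t1 by (simp add: leq_RKA_def)
  qed
next
  case (m_rec ws fs xs \<kappa>0 \<rho>1 \<sigma>m wk vk \<rho>2 \<kappa> x)
  show ?case
  proof (intro allI impI)
    fix \<rho> :: "'a env" and k :: "'a cont" and \<alpha> :: 'a
    assume a: "erase_env \<rho> = \<rho>1 @ \<rho>2 \<and> erase_cont k = \<kappa>"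
    let ?n = "mlen (MRec ws)"
    have t1: "tgt (MRec ws) (ERec xs \<kappa>0) = CElim \<sigma>m" "?n = length \<rho>1" using match_tgt[OF m_rec.hyps(1)] by auto
    have sp: "erase_env (take ?n \<rho>) = \<rho>1" "erase_env (drop ?n \<rho>) = \<rho>2"
      using env_split[of \<rho> \<rho>1 \<rho>2] a t1 by auto
    obtain u2 t where b2: "bwd wk \<sigma>m (drop ?n \<rho>) k \<alpha> = (u2, t)" by fastforce
    have e2: "erase_val u2 = vk" "erase_elim t = \<sigma>m"
      using bwd_sel[OF m_rec.hyps(2), rule_format, of "drop ?n \<rho>" k \<alpha>] b2 sp a by auto
    obtain u1 s1 where b1: "bwd (MRec ws) (ERec xs \<kappa>0) (take ?n \<rho>) (CElim t) \<alpha> = (u1, s1)" by fastforce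
    have "erase_val u1 = VRec fs ()" "erase_elim s1 = ERec xs \<kappa>0"
      using bwd_sel[OF m_rec.hyps(1), rule_format, of "take ?n \<rho>" "CElim t" \<alpha>] b1 sp e2 by auto
    then obtain gs b c where u1: "u1 = VRec gs b" "map (map_prod id erase_val) gs = fs" and s1: "s1 = ERec xs c" "erase_cont c = \<kappa>0"
      by (auto simp: er_VRec er_ERec)
    have h1: "erase_val (VRec gs (top::'a)) = VRec fs ()" "erase_val (VRec gs b) = VRec fs ()" using u1 by simp_all
    have h2: "erase_elim (ERec xs c) = ERec xs \<kappa>0" using s1 by simp
    obtain \<rho>a0 tt0 \<beta>0 where f10: "fwd (MRec ws) (VRec gs b) (ERec xs c) = (\<rho>a0, tt0, \<beta>0)"
      by (cases "fwd (MRec ws) (VRec gs b) (ERec xs c)") auto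
    obtain \<rho>a tt \<beta> where f1: "fwd (MRec ws) (VRec gs top) (ERec xs c) = (\<rho>a, tt, \<beta>)"
      by (cases "fwd (MRec ws) (VRec gs top) (ERec xs c)") auto
    have L10: "leq_env (take ?n \<rho>) \<rho>a0" "leq_cont (CElim t) tt0" "\<alpha> \<le> \<beta>0"
      using m_rec.IH(1)[rule_format, of "take ?n \<rho>" "CElim t" \<alpha>] sp e2 b1 f10 u1 s1 by (auto simp: leq_RKA_def)
    have M0: "leq_env \<rho>a0 \<rho>a" "leq_cont tt0 tt" "\<beta>0 \<le> \<beta>"
      using fwd_mono[OF m_rec.hyps(1), rule_format, of "VRec gs b" "ERec xs c" "VRec gs top" "ERec xs c"] h1 h2 f10 f1
      by (auto simp: leq_RKA_def intro: list.rel_refl)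
    have L1: "leq_env (take ?n \<rho>) \<rho>a" "leq_cont (CElim t) tt" "\<alpha> \<le> \<beta>"
      using leq_env_trans[OF L10(1) M0(1)] leq_cont_trans[OF L10(2) M0(2)] L10(3) M0(3) by auto
    have "erase_cont tt = CElim \<sigma>m" using fwd_sel[OF m_rec.hyps(1), rule_format, OF conjI[OF h1(1) h2]] f1 by auto
    then obtain t3 where t3: "tt = CElim t3" "erase_elim t3 = \<sigma>m" by (auto simp: er_CElim)
    have lt: "leq_elim t t3" using L1(2) t3 by simp
    obtain \<rho>c kc \<beta>c where fc: "fwd wk u2 t = (\<rho>c, kc, \<beta>c)" by (cases "fwd wk u2 t") auto
    obtain \<rho>b kb \<beta>' where f2: "fwd wk u2 t3 = (\<rho>b, kb, \<beta>')" by (cases "fwd wk u2 t3") auto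
    have M: "leq_env \<rho>c \<rho>b" "leq_cont kc kb" "\<beta>c \<le> \<beta>'"
      using fwd_mono[OF m_rec.hyps(2), rule_format, of u2 t u2 t3] e2 t3 lt fc f2 by (auto simp: leq_RKA_def)
    have L2: "leq_env (drop ?n \<rho>) \<rho>c" "leq_cont k kc" "\<alpha> \<le> \<beta>c"
      using m_rec.IH(2)[rule_format, of "drop ?n \<rho>" k \<alpha>] sp a b2 fc by (auto simp: leq_RKA_def)
    have "leq_env \<rho> (\<rho>a @ \<rho>b)" using take_drop_leq[OF L1(1) leq_env_trans[OF L2(1) M(1)]] .
    moreover have "leq_cont k kb" using leq_cont_trans[OF L2(2) M(2)] .
    moreover have "\<alpha> \<le> inf (inf \<alpha> \<beta>) \<beta>'" using L1(3) L2(3) M(3) by simp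
    ultimately show "leq_RKA (\<rho>, k, \<alpha>) (case bwd (MRec (ws @ [(x, wk)])) (ERec (xs @ [x]) \<kappa>0) \<rho> k \<alpha> of (v, \<sigma>) \<Rightarrow> fwd (MRec (ws @ [(x, wk)])) v \<sigma>)"
      using b1 b2 f1 f2 t3 t1 u1 s1 by (simp add: leq_RKA_def bwd_rec_snoc fwd_rec_snoc)
  qed
qed (auto simp: leq_RKA_def bwd.simps(6) fwd.simps(6) map_eq_Cons_conv)

lemma bwd_fwd: "matches w vr sr rr kr \<Longrightarrow>
   (\<forall>(v :: 'a::bounded_lattice val) \<sigma>. erase_val v = vr \<and> erase_elim \<sigma> = sr \<longrightarrow>
        leq_VS (case fwd w v \<sigma> of (\<rho>, \<kappa>, \<alpha>) \<Rightarrow> bwd w sr \<rho> \<kappa> \<alpha>) (v, \<sigma>))"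
proof (induction rule: matches.induct)
  case (m_cons w1 v1 \<sigma>1 \<rho>1 \<tau> w2 v2 \<rho>2 \<kappa> \<kappa>0)
  show ?case
  proof (intro allI impI)
    fix v :: "'a val" and \<sigma> :: "'a elim" assume "erase_val v = VCons () v1 v2 \<and> erase_elim \<sigma> = EList \<kappa>0 \<sigma>1"
    then obtain a u1 u2 k0 s1 where v: "v = VCons a u1 u2" "erase_val u1 = v1" "erase_val u2 = v2"
      and s: "\<sigma> = EList k0 s1" "erase_elim s1 = \<sigma>1" "erase_cont k0 = \<kappa>0" by (auto simp: er_VCons er_EList)
    have t1: "tgt w1 \<sigma>1 = CElim \<tau>" "mlen w1 = length \<rho>1" using match_tgt[OF m_cons.hyps(1)] by auto
    obtain \<rho>a tt \<beta> where f1: "fwd w1 u1 s1 = (\<rho>a, tt, \<beta>)" by (cases "fwd w1 u1 s1") auto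
    have "erase_env \<rho>a = \<rho>1" "erase_cont tt = CElim \<tau>" using fwd_sel[OF m_cons.hyps(1), rule_format, of u1 s1] v s f1 by auto
    then obtain t3 where ea: "erase_env \<rho>a = \<rho>1" and t3: "tt = CElim t3" "erase_elim t3 = \<tau>" by (auto simp: er_CElim)
    have len: "mlen w1 = length \<rho>a" using t1 ea by auto
    obtain \<rho>b kb \<beta>' where f2: "fwd w2 u2 t3 = (\<rho>b, kb, \<beta>')" by (cases "fwd w2 u2 t3") auto
    have eb: "erase_env \<rho>b = \<rho>2" "erase_cont kb = \<kappa>" using fwd_sel[OF m_cons.hyps(2), rule_format, of u2 t3] v t3 f2 by auto
    define af where "af = inf (inf a \<beta>) \<beta>'"
    have afb: "af \<le> \<beta>" "af \<le> \<beta>'" "af \<le> a" unfolding af_def by (meson inf_le1 inf_le2 order_trans)+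
    obtain u2' t' where b2: "bwd w2 \<tau> \<rho>b kb af = (u2', t')" by fastforce
    obtain u2'' t'' where b2': "bwd w2 \<tau> \<rho>b kb \<beta>' = (u2'', t'')" by fastforce
    have e2: "erase_elim t' = \<tau>" using bwd_sel[OF m_cons.hyps(2), rule_format, of \<rho>b kb af] eb b2 by auto
    have M2: "leq_val u2' u2''" "leq_elim t' t''"
      using bwd_mono[OF m_cons.hyps(2), rule_format, of \<rho>b kb \<rho>b kb af \<beta>'] eb b2 b2' using afb by (auto simp: leq_VS_def)
    have I2: "leq_val u2'' u2" "leq_elim t'' t3"
      using m_cons.IH(2)[rule_format, of u2 t3] v t3 f2 b2' by (auto simp: leq_VS_def)
    obtain u1' s1' where b1: "bwd w1 \<sigma>1 \<rho>a (CElim t') af = (u1', s1')" by fastforce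
    obtain u1'' s1'' where b1': "bwd w1 \<sigma>1 \<rho>a (CElim t3) \<beta> = (u1'', s1'')" by fastforce
    have M1: "leq_val u1' u1''" "leq_elim s1' s1''"
      using bwd_mono[OF m_cons.hyps(1), rule_format, of \<rho>a "CElim t'" \<rho>a "CElim t3" af \<beta>] ea e2 t3 b1 b1'
        leq_elim_trans[OF M2(2) I2(2)] using afb by (auto simp: leq_VS_def)
    have I1: "leq_val u1'' u1" "leq_elim s1'' s1"
      using m_cons.IH(1)[rule_format, of u1 s1] v s f1 t3 b1' by (auto simp: leq_VS_def)
    have "leq_val (VCons af u1' u2') v" using v leq_val_trans[OF M1(1) I1(1)] leq_val_trans[OF M2(1) I2(1)] afb
      by auto
    moreover have "leq_elim (EList (bot_cont \<kappa>0) s1') \<sigma>" using s leq_elim_trans[OF M1(2) I1(2)] bot_leq_cont[of k0] by auto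
    ultimately show "leq_VS (case fwd (MCons w1 w2) v \<sigma> of (\<rho>, \<kappa>, \<alpha>) \<Rightarrow> bwd (MCons w1 w2) (EList \<kappa>0 \<sigma>1) \<rho> \<kappa> \<alpha>) (v, \<sigma>)"
      using v s f1 t3 f2 b1 b2 t1 len by (simp add: leq_VS_def af_def)
  qed
next
  case (m_rec ws fs xs \<kappa>0 \<rho>1 \<sigma>m wk vk \<rho>2 \<kappa> x)
  show ?case
  proof (intro allI impI)
    fix v :: "'a val" and \<sigma> :: "'a elim" assume "erase_val v = VRec (fs @ [(x, vk)]) () \<and> erase_elim \<sigma> = ERec (xs @ [x]) \<kappa>0"
    then obtain a gs u k0 where v: "v = VRec (gs @ [(x, u)]) a" "map (map_prod id erase_val) gs = fs" "erase_val u = vk"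
      and s: "\<sigma> = ERec (xs @ [x]) k0" "erase_cont k0 = \<kappa>0"
      by (auto simp: er_VRec er_ERec dest!: map_snoc_inv)
    have t1: "tgt (MRec ws) (ERec xs \<kappa>0) = CElim \<sigma>m" "mlen (MRec ws) = length \<rho>1" using match_tgt[OF m_rec.hyps(1)] by auto
    have h1: "erase_val (VRec gs (top::'a)) = VRec fs ()" using v by simp
    have h2: "erase_elim (ERec xs k0) = ERec xs \<kappa>0" using s by simp
    obtain \<rho>a tt \<beta> where f1: "fwd (MRec ws) (VRec gs top) (ERec xs k0) = (\<rho>a, tt, \<beta>)"
      by (cases "fwd (MRec ws) (VRec gs top) (ERec xs k0)") auto
    have "erase_env \<rho>a = \<rho>1" "erase_cont tt = CElim \<sigma>m" using fwd_sel[OF m_rec.hyps(1), rule_format, OF conjI[OF h1 h2]] f1 by auto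
    then obtain t3 where ea: "erase_env \<rho>a = \<rho>1" and t3: "tt = CElim t3" "erase_elim t3 = \<sigma>m" by (auto simp: er_CElim)
    have len: "mlen (MRec ws) = length \<rho>a" using t1 ea by auto
    obtain \<rho>b kb \<beta>' where f2: "fwd wk u t3 = (\<rho>b, kb, \<beta>')" by (cases "fwd wk u t3") auto
    have eb: "erase_env \<rho>b = \<rho>2" "erase_cont kb = \<kappa>" using fwd_sel[OF m_rec.hyps(2), rule_format, of u t3] v t3 f2 by auto
    define af where "af = inf (inf a \<beta>) \<beta>'"
    have afb: "af \<le> \<beta>" "af \<le> \<beta>'" "af \<le> a" unfolding af_def by (meson inf_le1 inf_le2 order_trans)+
    obtain u2' t' where b2: "bwd wk \<sigma>m \<rho>b kb af = (u2', t')" by fastforce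
    obtain u2'' t'' where b2': "bwd wk \<sigma>m \<rho>b kb \<beta>' = (u2'', t'')" by fastforce
    have e2: "erase_elim t' = \<sigma>m" using bwd_sel[OF m_rec.hyps(2), rule_format, of \<rho>b kb af] eb b2 by auto
    have M2: "leq_val u2' u2''" "leq_elim t' t''"
      using bwd_mono[OF m_rec.hyps(2), rule_format, of \<rho>b kb \<rho>b kb af \<beta>'] eb b2 b2' using afb by (auto simp: leq_VS_def)
    have I2: "leq_val u2'' u" "leq_elim t'' t3"
      using m_rec.IH(2)[rule_format, of u t3] v t3 f2 b2' by (auto simp: leq_VS_def)
    obtain u1' s1' where b1: "bwd (MRec ws) (ERec xs \<kappa>0) \<rho>a (CElim t') af = (u1', s1')" by fastforce
    obtain u1'' s1'' where b1': "bwd (MRec ws) (ERec xs \<kappa>0) \<rho>a (CElim t3) \<beta> = (u1'', s1'')" by fastforce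
    have M1: "leq_val u1' u1''" "leq_elim s1' s1''"
      using bwd_mono[OF m_rec.hyps(1), rule_format, of \<rho>a "CElim t'" \<rho>a "CElim t3" af \<beta>] ea e2 t3 b1 b1'
        leq_elim_trans[OF M2(2) I2(2)] using afb by (auto simp: leq_VS_def)
    have I1: "leq_val u1'' (VRec gs top)" "leq_elim s1'' (ERec xs k0)"
      using m_rec.IH(1)[rule_format, OF conjI[OF h1 h2]] f1 t3 b1' by (auto simp: leq_VS_def)
    have U: "leq_val u1' (VRec gs top)" "leq_elim s1' (ERec xs k0)"
      using leq_val_trans[OF M1(1) I1(1)] leq_elim_trans[OF M1(2) I1(2)] .
    have "erase_val u1' = VRec fs ()" "erase_elim s1' = ERec xs \<kappa>0"
      using bwd_sel[OF m_rec.hyps(1), rule_format, of \<rho>a "CElim t'" af] ea e2 b1 by auto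
    then obtain gs' b c where u1: "u1' = VRec gs' b" and s1: "s1' = ERec xs c"
      by (auto simp: er_VRec er_ERec)
    have "leq_val (VRec (gs' @ [(x, u2')]) af) v" using v U u1 leq_val_trans[OF M2(1) I2(1)] afb
      by (auto intro!: list_all2_appendI)
    moreover have "leq_elim (ERec (xs @ [x]) c) \<sigma>" using s U s1 by auto
    ultimately show "leq_VS (case fwd (MRec (ws @ [(x, wk)])) v \<sigma> of (\<rho>, \<kappa>, \<alpha>) \<Rightarrow> bwd (MRec (ws @ [(x, wk)])) (ERec (xs @ [x]) \<kappa>0) \<rho> \<kappa> \<alpha>) (v, \<sigma>)"
      using v s f1 t3 f2 b1 b2 t1 len u1 s1 by (simp add: leq_VS_def af_def fwd_rec_snoc bwd_rec_snoc)
  qed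
qed (auto simp: leq_VS_def er_EVar er_EBool er_EList er_ERec er_VTrue er_VFalse er_VNil er_VRec
    bwd.simps(6) fwd.simps(6) bot_leq_cont bot_leq_elim)



theorem mainTheorem3:
  fixes w :: mderiv and vr :: "unit val" and sr :: "unit elim"
    and rr :: "unit env" and kr :: "unit cont"
  assumes "matches w vr sr rr kr"
  shows
    \<comment> \<open>bwd_w : Sel(rho) x Sel(kappa) x A -> Sel(v) x Sel(sigma)\<close>
    "(\<forall>(\<rho> :: 'a::bounded_lattice env) \<kappa> (\<alpha> :: 'a). \<rho> \<in> Sel_env rr \<and> \<kappa> \<in> Sel_cont kr \<longrightarrow>
        fst (bwd w sr \<rho> \<kappa> \<alpha>) \<in> Sel_val vr \<and> snd (bwd w sr \<rho> \<kappa> \<alpha>) \<in> Sel_elim sr)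
   \<and>
    \<comment> \<open>fwd_w : Sel(v) x Sel(sigma) -> Sel(rho) x Sel(kappa) x A\<close>
    (\<forall>(v :: 'a val) \<sigma>. v \<in> Sel_val vr \<and> \<sigma> \<in> Sel_elim sr \<longrightarrow>
        fst (fwd w v \<sigma>) \<in> Sel_env rr \<and> fst (snd (fwd w v \<sigma>)) \<in> Sel_cont kr)
   \<and>
    \<comment> \<open>bwd_w is monotone\<close>
    (\<forall>(\<rho> :: 'a env) \<kappa> \<alpha> \<rho>' \<kappa>' \<alpha>'.
        \<rho> \<in> Sel_env rr \<and> \<kappa> \<in> Sel_cont kr \<and> \<rho>' \<in> Sel_env rr \<and> \<kappa>' \<in> Sel_cont kr \<and>
        leq_RKA (\<rho>, \<kappa>, \<alpha>) (\<rho>', \<kappa>', \<alpha>') \<longrightarrow>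
        leq_VS (bwd w sr \<rho> \<kappa> \<alpha>) (bwd w sr \<rho>' \<kappa>' \<alpha>'))
   \<and>
    \<comment> \<open>fwd_w is monotone\<close>
    (\<forall>(v :: 'a val) \<sigma> v' \<sigma>'.
        v \<in> Sel_val vr \<and> \<sigma> \<in> Sel_elim sr \<and> v' \<in> Sel_val vr \<and> \<sigma>' \<in> Sel_elim sr \<and>
        leq_VS (v, \<sigma>) (v', \<sigma>') \<longrightarrow>
        leq_RKA (fwd w v \<sigma>) (fwd w v' \<sigma>'))
   \<and>
    \<comment> \<open>fwd_w (bwd_w (rho, kappa, alpha)) >= (rho, kappa, alpha)\<close>
    (\<forall>(\<rho> :: 'a env) \<kappa> \<alpha>. \<rho> \<in> Sel_env rr \<and> \<kappa> \<in> Sel_cont kr \<longrightarrow>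
        leq_RKA (\<rho>, \<kappa>, \<alpha>) (case bwd w sr \<rho> \<kappa> \<alpha> of (v, \<sigma>) \<Rightarrow> fwd w v \<sigma>))
   \<and>
    \<comment> \<open>bwd_w (fwd_w (v, sigma)) <= (v, sigma)\<close>
    (\<forall>(v :: 'a val) \<sigma>. v \<in> Sel_val vr \<and> \<sigma> \<in> Sel_elim sr \<longrightarrow>
        leq_VS (case fwd w v \<sigma> of (\<rho>, \<kappa>, \<alpha>) \<Rightarrow> bwd w sr \<rho> \<kappa> \<alpha>) (v, \<sigma>))"
  apply (intro conjI)
  subgoal using bwd_sel[OF assms] unfolding Sel_val_def Sel_elim_def Sel_cont_def Sel_env_def mem_Collect_eq by blast
  subgoal using fwd_sel[OF assms] unfolding Sel_val_def Sel_elim_def Sel_cont_def Sel_env_def mem_Collect_eq by blast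
  subgoal using bwd_mono[OF assms] unfolding Sel_val_def Sel_elim_def Sel_cont_def Sel_env_def mem_Collect_eq leq_RKA_def
    by (intro allI impI) (simp only: prod.case, blast)
  subgoal using fwd_mono[OF assms] unfolding Sel_val_def Sel_elim_def Sel_cont_def Sel_env_def mem_Collect_eq leq_VS_def
    by (intro allI impI) (simp only: fst_conv snd_conv, blast)
  subgoal using fwd_bwd[OF assms] unfolding Sel_val_def Sel_elim_def Sel_cont_def Sel_env_def mem_Collect_eq by blast
  subgoal using bwd_fwd[OF assms] unfolding Sel_val_def Sel_elim_def Sel_cont_def Sel_env_def mem_Collect_eq by blast
  done

end
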